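(* Let $R$ be a ring and let $A$, $B$, $C'$ be $n\times n$ matrices over $R$ such that $C'$ differs from the product $C=A\times B$ in at most $k$ entries. Then Algorithm 1 (described in the context), run with parameter $k$, identifies these erroneous entries and corrects them, outputting $C$, in $\tilde{O}(k^2n^2)$ time.
   Context: Running time is measured in a unit-cost model where each ring operation and elementary operation costs $O(1)$; $\tilde{O}$ suppresses factors polylogarithmic in $n$ and $k$. Algorithm 1 (deterministic), on input $A,B,C'$ and $k$: let $L$ be the set of the first $ck\log n/\log\log n$ primes, where $c$ is the absolute constant with the property that for every set $P$ of $l$ distinct indices in $\{1,\dots,n\}$ and every $i\in P$ there is a prime $p$ among the first $cl\log n/\log\log n$ primes with $i\bmod p\neq i'\bmod p$ for all $i'\in P\setminus\{i\}$. Set $C^*\leftarrow C'$, $B^*\leftarrow B$. For each prime $p\in L$: (1) for $j=1,\dots,n$, move column $j$ of $C^*$ into the $(j\bmod p+1)$-th strip (group) of columns of $C^*$, and correspondingly move column $j$ of $B^*$ into the $(j\bmod p+1)$-th strip of columns of $B^*$ (the same permutation applied to columns of both); (2) for each strip $V$ of $C^*$: let $v\in\{0,1\}^n$ have $j$-th coordinate $1$ iff the $j$-th column of $C^*$ belongs to $V$; compute the vectors $A(B^*v^T)$ and $C^*v^T$; for each coordinate $i$ where they differ, compute the entries in row $i$ of the strip of $A\times B^*$ corresponding to $V$ and overwrite row $i$ of $V$ in $C^*$ with them. Finally output $C^*$ (with columns in their original order). *)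

theory Defs
  imports Complex_Main "HOL-Computational_Algebra.Primes"
begin

text \<open>n x n matrices over a ring are functions nat => nat => 'a, indexed by 1..n
  (rows i, columns j in {1..n}); entries outside this range are irrelevant.\<close>

type_synonym 'a matrix = "nat \<Rightarrow> nat \<Rightarrow> 'a"

definition matprod :: "nat \<Rightarrow> 'a::ring_1 matrix \<Rightarrow> 'a matrix \<Rightarrow> 'a matrix" where
  "matprod n A B = (\<lambda>i j. \<Sum>l = 1..n. A i l * B l j)"

definition mat_vec :: "nat \<Rightarrow> 'a::ring_1 matrix \<Rightarrow> (nat \<Rightarrow> 'a) \<Rightarrow> (nat \<Rightarrow> 'a)" where
  "mat_vec n M v = (\<lambda>i. \<Sum>l = 1..n. M i l * v l)"

definition num_errors :: "nat \<Rightarrow> 'a::ring_1 matrix \<Rightarrow> 'a matrix \<Rightarrow> 'a matrix \<Rightarrow> nat" where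
  "num_errors n A B C' = card {(i, j). i \<in> {1..n} \<and> j \<in> {1..n} \<and> C' i j \<noteq> matprod n A B i j}"

text \<open>The factor log n / log log n (natural logarithms); for n <= 2, where log log n
  is not positive, the convention value 1 is used.\<close>
definition logratio :: "nat \<Rightarrow> real" where
  "logratio n = (if n \<le> 2 then 1 else ln (real n) / ln (ln (real n)))"

definition num_primes :: "real \<Rightarrow> nat \<Rightarrow> nat \<Rightarrow> nat" where
  "num_primes c l n = nat \<lceil>c * real l * logratio n\<rceil>"

definition first_primes :: "nat \<Rightarrow> nat list" where
  "first_primes m = sorted_list_of_set {p::nat. prime p \<and> card {q::nat. prime q \<and> q < p} < m}"

definition separating_const :: "real \<Rightarrow> bool" where
  "separating_const c \<longleftrightarrow>
     (\<forall>n l (P :: nat set) i. P \<subseteq> {1..n} \<and> card P = l \<and> i \<in> P \<longrightarrow>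
        (\<exists>p \<in> set (first_primes (num_primes c l n)). \<forall>i' \<in> P - {i}. i mod p \<noteq> i' mod p))"

text \<open>Columns are referred to by their
  original index j, so the strip of column j for prime p is j mod p + 1 (represented by
  the residue r = j mod p); the physical permutation of columns of C* and B* is only
  charged for (2 n^2 + n per prime, n^2 for restoring the original order at the end).
  Pairs (C*, t): current matrix and accumulated cost.\<close>

definition strip_step :: "nat \<Rightarrow> 'a::ring_1 matrix \<Rightarrow> 'a matrix \<Rightarrow> nat \<Rightarrow> nat
    \<Rightarrow> 'a matrix \<times> nat \<Rightarrow> 'a matrix \<times> nat" where
  "strip_step n A B p r = (\<lambda>(Cs, t).
     let V = {j \<in> {1..n}. j mod p = r};
         v = (\<lambda>j. if j \<in> V then 1 else 0);
         x = mat_vec n A (mat_vec n B v);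
         y = mat_vec n Cs v;
         D = {i \<in> {1..n}. x i \<noteq> y i};
         Cs' = (\<lambda>i j. if i \<in> D \<and> j \<in> V then matprod n A B i j else Cs i j)
     in (Cs', t + 6 * n * n + 2 * n + card D * card V * (2 * n + 1)))"

definition prime_step :: "nat \<Rightarrow> 'a::ring_1 matrix \<Rightarrow> 'a matrix \<Rightarrow> nat
    \<Rightarrow> 'a matrix \<times> nat \<Rightarrow> 'a matrix \<times> nat" where
  "prime_step n A B p = (\<lambda>(Cs, t).
     fold (strip_step n A B p) [0..<p] (Cs, t + 2 * n * n + n))"

text \<open>Cost of generating the prime list (charged generously as (largest prime)^2,
  e.g. by trial division).\<close>
definition primes_cost :: "nat list \<Rightarrow> nat" where
  "primes_cost L = (Max (insert 2 (set L)))\<^sup>2"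

definition algorithm1 :: "real \<Rightarrow> nat \<Rightarrow> nat \<Rightarrow> 'a::ring_1 matrix \<Rightarrow> 'a matrix
    \<Rightarrow> 'a matrix \<Rightarrow> 'a matrix \<times> nat" where
  "algorithm1 c n k A B C' =
     (let L = first_primes (num_primes c k n);
          (Cs, t) = fold (prime_step n A B) L (C', primes_cost L)
      in (Cs, t + n * n))"

end

theory Submission
  imports Defs
begin

lemma Suc_div_ind: "(q::nat) > 0 \<Longrightarrow> Suc n div q = n div q + (if q dvd Suc n then 1 else 0)"
  by (auto simp: div_Suc dvd_eq_mod_eq_0)

lemma mult_card:
  fixes p x B :: nat
  assumes p: "prime p" and x: "x > 0" "x < p ^ B"
  shows "multiplicity p x = card ({1..B} \<inter> {i. p ^ i dvd x})"
proof -
  have nu: "\<not> is_unit p" using p by auto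
  have x0: "x \<noteq> 0" using x by simp
  have "p ^ multiplicity p x dvd x" by (rule multiplicity_dvd)
  hence "p ^ multiplicity p x \<le> x" using x by (simp add: dvd_imp_le)
  hence "p ^ multiplicity p x < p ^ B" using x by linarith
  hence mB: "multiplicity p x < B"
    using power_less_imp_less_exp[of p "multiplicity p x" B] p prime_gt_1_nat by simp
  have iff: "p ^ i dvd x \<longleftrightarrow> i \<le> multiplicity p x" for i
    by (rule power_dvd_iff_le_multiplicity[OF x0 nu])
  have "{1..B} \<inter> {i. p ^ i dvd x} = {1..multiplicity p x}"
    using mB unfolding iff by auto
  thus ?thesis by simp
qed

lemma legendre:
  fixes p B n :: nat
  assumes p: "prime p" and nB: "n < p ^ B"
  shows "multiplicity p (fact n) = (\<Sum>i=1..B. n div p ^ i)"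
  using nB
proof (induction n)
  case 0
  then show ?case by simp
next
  case (Suc n)
  have pos: "p ^ i > 0" for i using p prime_gt_0_nat by simp
  have "multiplicity p (fact (Suc n) :: nat) = multiplicity p (Suc n * fact n)" by simp
  also have "\<dots> = multiplicity p (Suc n) + multiplicity p (fact n :: nat)"
    by (rule prime_elem_multiplicity_mult_distrib) (use p in auto)
  also have "multiplicity p (Suc n) = card ({1..B} \<inter> {i. p ^ i dvd Suc n})"
    by (rule mult_card) (use p Suc.prems in auto)
  also have "\<dots> = (\<Sum>i=1..B. (if p ^ i dvd Suc n then 1 else 0))"
    by (simp add: sum.If_cases)
  also have "multiplicity p (fact n :: nat) = (\<Sum>i=1..B. n div p ^ i)"
    using Suc by simp
  also have "(\<Sum>i=1..B. (if p ^ i dvd Suc n then 1 else 0)) + (\<Sum>i=1..B. n div p ^ i)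
      = (\<Sum>i=1..B. Suc n div p ^ i)"
    by (subst sum.distrib[symmetric]) (rule sum.cong, simp_all add: Suc_div_ind[OF pos])
  finally show ?case .
qed

lemma div2_le: "(2*N) div (q::nat) \<le> (if q \<le> 2*N then 1 else 0) + 2 * (N div q)"
proof (cases "q \<le> 2*N \<and> q > 0")
  case True
  hence q: "q > 0" by simp
  have e: "2*N = 2*(N mod q) + (2*(N div q)) * q" using mod_div_mult_eq[of N q] by (metis distrib_left mult.assoc)
  have "2*N div q = 2*(N mod q) div q + 2*(N div q)"
    using q by (subst e) simp
  moreover have "2*(N mod q) < 2*q" using q by simp
  hence "2*(N mod q) div q < 2" by (rule less_mult_imp_div_less)
  ultimately show ?thesis using True by simp
next
  case False thus ?thesis by auto
qed

lemma central_mult_bound: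
  fixes p N :: nat
  assumes p: "prime p" and N: "N > 0"
  shows "p ^ multiplicity p ((2*N) choose N) \<le> 2*N"
proof -
  define B where "B = 2*N"
  have p2: "p \<ge> 2" using p prime_ge_2_nat by blast
  have "2*N < 2 ^ (2*N)" by (rule less_exp)
  also have "\<dots> \<le> p ^ (2*N)" using p2 by (simp add: power_mono)
  finally have nB: "2*N < p ^ B" by (simp add: B_def)
  have nB': "N < p ^ B" using nB by linarith
  define C where "C = (2*N) choose N"
  have C0: "C > 0" by (simp add: C_def)
  have "fact N * fact (2*N - N) * C = (fact (2*N) :: nat)"
    unfolding C_def by (rule binomial_fact_lemma) simp
  hence fe: "C * (fact N * fact N) = (fact (2*N) :: nat)" by (simp add: mult_2 algebra_simps)
  have "multiplicity p (fact (2*N) :: nat) = multiplicity p C + multiplicity p (fact N * fact N :: nat)"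
    unfolding fe[symmetric] by (rule prime_elem_multiplicity_mult_distrib) (use p C0 in auto)
  also have "multiplicity p (fact N * fact N :: nat) = 2 * multiplicity p (fact N :: nat)"
    by (subst prime_elem_multiplicity_mult_distrib) (use p in auto)
  finally have eq: "multiplicity p C + 2 * (\<Sum>i=1..B. N div p ^ i) = (\<Sum>i=1..B. (2*N) div p ^ i)"
    using legendre[OF p nB] legendre[OF p nB'] by simp
  have "(\<Sum>i=1..B. (2*N) div p ^ i) \<le> (\<Sum>i=1..B. (if p ^ i \<le> 2*N then 1 else 0) + 2 * (N div p ^ i))"
    by (rule sum_mono) (rule div2_le)
  also have "\<dots> = card ({1..B} \<inter> {i. p ^ i \<le> 2*N}) + 2 * (\<Sum>i=1..B. N div p ^ i)"
    by (simp add: sum.distrib sum.If_cases sum_distrib_left)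
  finally have le: "multiplicity p C \<le> card ({1..B} \<inter> {i. p ^ i \<le> 2*N})" using eq by linarith
  show ?thesis
  proof (rule ccontr)
    assume "\<not> ?thesis"
    hence big: "2*N < p ^ multiplicity p C" unfolding C_def by simp
    have "{1..B} \<inter> {i. p ^ i \<le> 2*N} \<subseteq> {1..<multiplicity p C}"
    proof
      fix i assume "i \<in> {1..B} \<inter> {i. p ^ i \<le> 2*N}"
      hence "i \<ge> 1" "p ^ i < p ^ multiplicity p C" using big by auto
      thus "i \<in> {1..<multiplicity p C}" using p2 power_less_imp_less_exp by auto
    qed
    hence "card ({1..B} \<inter> {i. p ^ i \<le> 2*N}) \<le> multiplicity p C - 1"
      using card_mono[of "{1..<multiplicity p C}"] by fastforce
    moreover have "multiplicity p C \<ge> 1" using big N by (cases "multiplicity p C") auto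
    ultimately show False using le by linarith
  qed
qed

definition pic :: "nat \<Rightarrow> nat" where "pic x = card {q. prime q \<and> q \<le> x}"

lemma central_le_pic:
  fixes N :: nat assumes N: "N > 0"
  shows "(2*N) choose N \<le> (2*N) ^ pic (2*N)"
proof -
  define C where "C = (2*N) choose N"
  have C0: "C > 0" by (simp add: C_def)
  have sub: "prime_factors C \<subseteq> {q. prime q \<and> q \<le> 2*N}"
  proof
    fix q assume q: "q \<in> prime_factors C"
    hence pq: "prime q" and qd: "q dvd C" by (auto simp: in_prime_factors_iff)
    have "C dvd fact (2*N)"
      unfolding C_def using binomial_fact_lemma[of N "2*N"]
      by (metis dvd_triv_right le_add2 mult_2 mult.commute)
    hence "q dvd fact (2*N)" using qd dvd_trans by blast
    thus "q \<in> {q. prime q \<and> q \<le> 2*N}" using pq prime_dvd_fact_iff[OF pq] by auto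
  qed
  have fin: "finite {q::nat. prime q \<and> q \<le> 2*N}" by simp
  have "C = (\<Prod>p \<in> prime_factors C. p ^ multiplicity p C)"
    by (rule prime_factorization_nat[OF C0])
  also have "\<dots> \<le> (\<Prod>p \<in> prime_factors C. 2*N)"
    by (rule prod_mono) (use central_mult_bound N in \<open>auto simp: C_def in_prime_factors_iff\<close>)
  also have "\<dots> = (2*N) ^ card (prime_factors C)" by simp
  also have "\<dots> \<le> (2*N) ^ pic (2*N)"
    unfolding pic_def using N by (intro power_increasing card_mono[OF fin sub]) auto
  finally show ?thesis by (simp add: C_def)
qed

lemma two_pow_le_central:
  fixes N :: nat assumes N: "N > 0"
  shows "2 ^ N \<le> (2*N) choose N"
proof -
  have "2*N \<le> 2 ^ N" using N
  proof (induction N)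
    case 0 then show ?case by simp
  next
    case (Suc n) then show ?case by (cases n) auto
  qed
  hence a: "real (2*N) \<le> 2 ^ N" by (metis of_nat_le_iff of_nat_numeral of_nat_power)
  have "(4::real) ^ N / (2*real N) \<le> real ((2*N) choose N)"
    by (rule central_binomial_lower_bound[OF N])
  moreover have "(2::real) ^ N \<le> 4 ^ N / (2*real N)"
  proof -
    have "(2::real) ^ N * (2*real N) \<le> 2 ^ N * 2 ^ N" using a by simp
    also have "\<dots> = 4 ^ N" by (simp add: power_mult_distrib[symmetric])
    finally show ?thesis using N by (simp add: field_simps)
  qed
  ultimately have "(2::real) ^ N \<le> real ((2*N) choose N)" by linarith
  thus ?thesis by (metis of_nat_le_iff of_nat_numeral of_nat_power)
qed

lemma pic_pow2:
  fixes j :: nat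
  shows "2 ^ j \<le> (j+1) * pic (2 ^ (j+1))"
proof -
  define N :: nat where "N = 2 ^ j"
  have N: "N > 0" by (simp add: N_def)
  have "(2::nat) ^ N \<le> (2*N) ^ pic (2*N)"
    using two_pow_le_central[OF N] central_le_pic[OF N] by linarith
  also have "(2*N) = 2 ^ (j+1)" by (simp add: N_def)
  also have "(2 ^ (j+1) :: nat) ^ pic (2 ^ (j+1)) = 2 ^ ((j+1) * pic (2 ^ (j+1)))"
    by (rule power_mult[symmetric])
  finally have "(2::nat) ^ N \<le> 2 ^ ((j+1) * pic (2 ^ (j+1)))" .
  hence "N \<le> (j+1) * pic (2 ^ (j+1))" by simp
  thus ?thesis unfolding N_def .
qed

lemma exists_T: "\<exists>T::nat. T \<ge> 1 \<and> k < 2 ^ T \<and> 2 ^ T \<le> 2 * k"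
  if "k \<ge> 1" for k :: nat
proof -
  have "\<exists>t. 2 ^ t \<le> k \<and> k < 2 ^ (t+1)" using ex_power_ivl1[of 2 k] that by simp
  then obtain t where "2 ^ t \<le> k" "k < 2 ^ (t+1)" by blast
  thus ?thesis by (intro exI[of _ "t+1"]) auto
qed

lemma prime_bound:
  fixes m :: nat
  shows "\<exists>X::nat. (\<forall>p. card {q. prime q \<and> q < p} < m \<longrightarrow> p \<le> X)
      \<and> real X \<le> 16 * (real m + 1) * (ln (2 * real m + 2) / ln 2 + 1)"
proof -
  obtain T where T: "T \<ge> 1" "m + 1 < 2 ^ T" "2 ^ T \<le> 2 * (m+1)"
    using exists_T[of "m+1"] by auto
  obtain s where s: "s \<ge> 1" "2*(T + 1) < 2 ^ s" "2 ^ s \<le> 2 * (2*(T+1))"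
    using exists_T[of "2*(T+1)"] by auto
  have ts: "T + s + 1 \<le> 2 ^ s"
  proof -
    obtain s' where s': "s = Suc s'" using s(1) by (cases s) auto
    have "s' < 2 ^ s'" by (rule less_exp)
    moreover have "T + 1 < 2 ^ s'" using s(2) s' by simp
    moreover have "(2::nat) ^ s = 2 * 2 ^ s'" using s' by simp
    ultimately show ?thesis using s' by linarith
  qed
  define j where "j = T + s"
  define X :: nat where "X = 2 ^ (j+1)"
  have "(m+1) * (j+1) \<le> 2 ^ T * 2 ^ s"
    using T(2) ts unfolding j_def by (intro mult_le_mono) auto
  also have "\<dots> = 2 ^ j" by (simp add: j_def power_add)
  also have "\<dots> \<le> (j+1) * pic X" unfolding X_def by (rule pic_pow2)
  finally have "(j+1) * (m+1) \<le> (j+1) * pic X" by (simp add: mult.commute)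
  hence mpic: "m + 1 \<le> pic X" using mult_le_cancel1[of "j+1" "m+1" "pic X"] by simp
  have bound: "p \<le> X" if "card {q. prime q \<and> q < p} < m" for p
  proof (rule ccontr)
    assume "\<not> p \<le> X"
    hence "{q. prime q \<and> q \<le> X} \<subseteq> {q. prime q \<and> q < p}" by auto
    hence "pic X \<le> card {q. prime q \<and> q < p}" unfolding pic_def by (intro card_mono) auto
    thus False using mpic that by linarith
  qed
  have "X = 2 * 2 ^ T * 2 ^ s" by (simp add: X_def j_def power_add)
  also have "\<dots> \<le> 2 * (2 * (m+1)) * (4 * (T+1))"
    using T(3) s(3) by (intro mult_le_mono) auto
  finally have X0: "X \<le> 2 * (2 * (m+1)) * (4 * (T+1))" .
  have X1: "real X \<le> 16 * (real m + 1) * (real T + 1)"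
  proof -
    have "real X \<le> real (2 * (2 * (m+1)) * (4 * (T+1)))" using X0 by (simp only: of_nat_le_iff)
    also have "real (2 * (2 * (m+1)) * (4 * (T+1))) = 16 * (real m + 1) * (real T + 1)" by (simp, algebra)
    finally show ?thesis .
  qed
  have "real T * ln 2 = ln ((2::real) ^ T)" by (simp add: ln_realpow)
  also have "\<dots> \<le> ln (2 * real m + 2)"
  proof -
    have "real (2 ^ T) \<le> real (2 * (m+1))" using T(3) by (simp only: of_nat_le_iff)
    hence "(2::real) ^ T \<le> 2 * real m + 2" by simp
    thus ?thesis by simp
  qed
  finally have "real T \<le> ln (2 * real m + 2) / ln 2" by (simp add: field_simps)
  hence "real X \<le> 16 * (real m + 1) * (ln (2 * real m + 2) / ln 2 + 1)"
    using X1 by (smt (verit) mult_left_mono of_nat_0_le_iff)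
  thus ?thesis using bound by blast
qed

definition errs :: "nat \<Rightarrow> 'a::ring_1 matrix \<Rightarrow> 'a matrix \<Rightarrow> 'a matrix \<Rightarrow> (nat \<times> nat) set" where
  "errs n A B Cs = {(i, j). i \<in> {1..n} \<and> j \<in> {1..n} \<and> Cs i j \<noteq> matprod n A B i j}"

definition sV :: "nat \<Rightarrow> nat \<Rightarrow> nat \<Rightarrow> nat set" where
  "sV n p r = {j \<in> {1..n}. j mod p = r}"

definition sD :: "nat \<Rightarrow> 'a::ring_1 matrix \<Rightarrow> 'a matrix \<Rightarrow> nat \<Rightarrow> nat \<Rightarrow> 'a matrix \<Rightarrow> nat set" where
  "sD n A B p r Cs = {i \<in> {1..n}.
      mat_vec n A (mat_vec n B (\<lambda>j. if j \<in> sV n p r then 1 else 0)) i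
        \<noteq> mat_vec n Cs (\<lambda>j. if j \<in> sV n p r then 1 else 0) i}"

lemma finite_errs: "finite (errs n A B Cs)"
  by (rule finite_subset[of _ "{1..n} \<times> {1..n}"]) (auto simp: errs_def)

lemma strip_step_eq:
  "strip_step n A B p r (Cs, t) =
     ((\<lambda>i j. if i \<in> sD n A B p r Cs \<and> j \<in> sV n p r then matprod n A B i j else Cs i j),
      t + 6 * n * n + 2 * n + card (sD n A B p r Cs) * card (sV n p r) * (2 * n + 1))"
  by (simp add: strip_step_def Let_def sD_def sV_def)

lemma mv_assoc:
  "mat_vec n A (mat_vec n B v) i = (\<Sum>l=1..n. matprod n A B i l * v l)"
proof -
  have "mat_vec n A (mat_vec n B v) i = (\<Sum>l=1..n. \<Sum>m=1..n. A i l * B l m * v m)"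
    by (simp add: mat_vec_def sum_distrib_left mult.assoc)
  also have "\<dots> = (\<Sum>m=1..n. \<Sum>l=1..n. A i l * B l m * v m)" by (rule sum.swap)
  also have "\<dots> = (\<Sum>m=1..n. matprod n A B i m * v m)"
    by (simp add: matprod_def sum_distrib_right)
  finally show ?thesis .
qed

lemma strip_errs_mono:
  "errs n A B (fst (strip_step n A B p r (Cs, t))) \<subseteq> errs n A B Cs"
  by (auto simp: strip_step_eq errs_def split: if_splits)

lemma sD_sub:
  "sD n A B p r Cs \<subseteq> fst ` {e \<in> errs n A B Cs. snd e mod p = r}"
proof
  fix i assume i: "i \<in> sD n A B p r Cs"
  define v where "v = (\<lambda>j. if j \<in> sV n p r then (1::'a) else 0)"
  show "i \<in> fst ` {e \<in> errs n A B Cs. snd e mod p = r}"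
  proof (rule ccontr)
    assume no: "i \<notin> fst ` {e \<in> errs n A B Cs. snd e mod p = r}"
    have "matprod n A B i l * v l = Cs i l * v l" if l: "l \<in> {1..n}" for l
    proof (cases "l \<in> sV n p r")
      case True
      hence "(i, l) \<notin> errs n A B Cs" using no sV_def by force
      thus ?thesis using i l by (auto simp: errs_def sD_def)
    next
      case False thus ?thesis by (simp add: v_def)
    qed
    hence "mat_vec n A (mat_vec n B v) i = mat_vec n Cs v i"
      unfolding mv_assoc by (simp add: mat_vec_def)
    thus False using i by (simp add: sD_def v_def)
  qed
qed

lemma strip_fix:
  assumes ij: "(i, j) \<in> errs n A B Cs" and r: "j mod p = r"
    and uniq: "\<And>j'. (i, j') \<in> errs n A B Cs \<Longrightarrow> j' mod p = r \<Longrightarrow> j' = j"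
  shows "(i, j) \<notin> errs n A B (fst (strip_step n A B p r (Cs, t)))"
proof -
  define v where "v = (\<lambda>j. if j \<in> sV n p r then (1::'a) else 0)"
  have i: "i \<in> {1..n}" and j: "j \<in> {1..n}" and neq: "Cs i j \<noteq> matprod n A B i j"
    using ij by (auto simp: errs_def)
  have jV: "j \<in> sV n p r" using j r by (simp add: sV_def)
  have tm: "(matprod n A B i l - Cs i l) * v l = (if l = j then matprod n A B i j - Cs i j else 0)"
    if l: "l \<in> {1..n}" for l
  proof (cases "l = j")
    case True thus ?thesis using jV by (simp add: v_def)
  next
    case False
    show ?thesis
    proof (cases "l \<in> sV n p r")
      case True
      hence "(i, l) \<notin> errs n A B Cs" using uniq False sV_def by force
      thus ?thesis using i l False by (auto simp: errs_def)
    next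
      case F: False thus ?thesis using False by (simp add: v_def)
    qed
  qed
  have "mat_vec n A (mat_vec n B v) i - mat_vec n Cs v i
      = (\<Sum>l=1..n. (matprod n A B i l - Cs i l) * v l)"
    unfolding mv_assoc by (simp add: mat_vec_def sum_subtractf left_diff_distrib)
  also have "\<dots> = (\<Sum>l=1..n. (if l = j then matprod n A B i j - Cs i j else 0))"
    by (rule sum.cong) (auto simp: tm)
  also have "\<dots> = matprod n A B i j - Cs i j" using j by simp
  finally have "mat_vec n A (mat_vec n B v) i \<noteq> mat_vec n Cs v i" using neq by auto
  hence "i \<in> sD n A B p r Cs" using i by (simp add: sD_def v_def)
  thus ?thesis using jV by (simp add: strip_step_eq errs_def)
qed

lemma fold_inv:
  fixes f :: "'x \<Rightarrow> 'y \<times> nat \<Rightarrow> 'y \<times> nat"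
  assumes "\<And>x s. x \<in> set xs \<Longrightarrow> P s \<Longrightarrow> P (f x s) \<and> snd (f x s) \<le> snd s + g x"
  shows "P s \<Longrightarrow> P (fold f xs s) \<and> snd (fold f xs s) \<le> snd s + sum_list (map g xs)"
  using assms
proof (induction xs arbitrary: s)
  case Nil then show ?case by simp
next
  case (Cons x xs)
  have 1: "P (f x s)" "snd (f x s) \<le> snd s + g x" using Cons.prems by auto
  have "P (fold f xs (f x s)) \<and> snd (fold f xs (f x s)) \<le> snd (f x s) + sum_list (map g xs)"
    by (rule Cons.IH[OF 1(1)]) (use Cons.prems in auto)
  thus ?case using 1 by simp
qed

lemma fold_keep:
  assumes "\<And>x s. x \<in> set xs \<Longrightarrow> P s \<Longrightarrow> P (f x s)"
  shows "P s \<Longrightarrow> P (fold f xs s)"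
  using assms by (induction xs arbitrary: s) auto

lemma prime_step_eq:
  "prime_step n A B p (Cs, t) = fold (strip_step n A B p) [0..<p] (Cs, t + 2 * n * n + n)"
  by (simp add: prime_step_def)

lemma strip_cost:
  assumes sub: "errs n A B Cs \<subseteq> E0" and fin: "finite E0"
  shows "snd (strip_step n A B p r (Cs, t)) \<le> t + (6 * n * n + 2 * n + card {e \<in> E0. snd e mod p = r} * (n * (2 * n + 1)))"
proof -
  have "card (sD n A B p r Cs) \<le> card (fst ` {e \<in> errs n A B Cs. snd e mod p = r})"
    by (rule card_mono[OF _ sD_sub]) (simp add: finite_errs)
  also have "\<dots> \<le> card {e \<in> errs n A B Cs. snd e mod p = r}"
    by (rule card_image_le) (simp add: finite_errs)
  also have "\<dots> \<le> card {e \<in> E0. snd e mod p = r}"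
    by (rule card_mono) (use fin sub in auto)
  finally have D: "card (sD n A B p r Cs) \<le> card {e \<in> E0. snd e mod p = r}" .
  have "card (sV n p r) \<le> card {1..n}" by (rule card_mono) (auto simp: sV_def)
  hence V: "card (sV n p r) \<le> n" by simp
  have "card (sD n A B p r Cs) * card (sV n p r) * (2 * n + 1) \<le> card {e \<in> E0. snd e mod p = r} * n * (2 * n + 1)"
    using D V by (intro mult_le_mono) auto
  hence "card (sD n A B p r Cs) * card (sV n p r) * (2 * n + 1) \<le> card {e \<in> E0. snd e mod p = r} * (n * (2 * n + 1))"
    by (simp only: mult.assoc)
  thus ?thesis unfolding strip_step_eq snd_conv by linarith
qed

lemma sum_classes:
  fixes E0 :: "(nat \<times> nat) set"
  assumes fin: "finite E0"
  shows "(\<Sum>r<p. card {e \<in> E0. snd e mod p = r}) \<le> card E0"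
proof -
  have "(\<Sum>r<p. card {e \<in> E0. snd e mod p = r}) = card (\<Union>r\<in>{..<p}. {e \<in> E0. snd e mod p = r})"
    by (rule card_UN_disjoint[symmetric]) (use fin in auto)
  also have "\<dots> \<le> card E0" by (rule card_mono[OF fin]) auto
  finally show ?thesis .
qed

lemma prime_cost:
  assumes sub: "errs n A B Cs \<subseteq> E0" and fin: "finite E0"
  shows "errs n A B (fst (prime_step n A B p (Cs, t))) \<subseteq> E0
    \<and> snd (prime_step n A B p (Cs, t)) \<le> t + (2 * n * n + n + p * (6 * n * n + 2 * n) + card E0 * (n * (2 * n + 1)))"
proof -
  define g where "g r = 6 * n * n + 2 * n + card {e \<in> E0. snd e mod p = r} * (n * (2 * n + 1))" for r
  define P where "P s = (errs n A B (fst s) \<subseteq> E0)" for s :: "'a matrix \<times> nat"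
  have step: "P (strip_step n A B p r s) \<and> snd (strip_step n A B p r s) \<le> snd s + g r"
    if "P s" for r s
  proof -
    obtain Cs' t' where s: "s = (Cs', t')" by (cases s)
    show ?thesis using that strip_errs_mono[of n A B p r Cs' t'] strip_cost[of n A B Cs' E0 p r t'] fin
      unfolding P_def g_def s by auto
  qed
  have "P (fold (strip_step n A B p) [0..<p] (Cs, t + 2 * n * n + n))
     \<and> snd (fold (strip_step n A B p) [0..<p] (Cs, t + 2 * n * n + n))
        \<le> snd (Cs, t + 2 * n * n + n) + sum_list (map g [0..<p])"
    by (rule fold_inv) (use step sub P_def in auto)
  moreover have "sum_list (map g [0..<p]) = (\<Sum>r<p. g r)"
    by (simp add: sum_list_distinct_conv_sum_set atLeast0LessThan)
  moreover have "(\<Sum>r<p. g r) \<le> p * (6 * n * n + 2 * n) + card E0 * (n * (2 * n + 1))"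
  proof -
    have "(\<Sum>r<p. g r) = p * (6 * n * n + 2 * n) + (\<Sum>r<p. card {e \<in> E0. snd e mod p = r}) * (n * (2 * n + 1))"
      by (simp add: g_def sum.distrib sum_distrib_right)
    also have "\<dots> \<le> p * (6 * n * n + 2 * n) + card E0 * (n * (2 * n + 1))"
      using sum_classes[OF fin, of p] by (intro add_left_mono mult_right_mono) auto
    finally show ?thesis .
  qed
  ultimately show ?thesis unfolding prime_step_eq P_def by simp
qed

lemma prime_fix:
  assumes sub: "errs n A B Cs \<subseteq> E0" and p: "p > 0" and ij: "(i, j) \<in> E0"
    and sep: "\<And>j'. (i, j') \<in> E0 \<Longrightarrow> j' \<noteq> j \<Longrightarrow> j mod p \<noteq> j' mod p"
  shows "(i, j) \<notin> errs n A B (fst (prime_step n A B p (Cs, t)))"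
proof -
  define r0 where "r0 = j mod p"
  have r0p: "r0 < p" using p by (simp add: r0_def)
  have sp1: "[0..<p] = [0..<r0] @ [r0..<p]" using upt_add_eq_append[of 0 r0 "p - r0"] r0p by simp
  have split: "[0..<p] = [0..<r0] @ r0 # [Suc r0..<p]" unfolding sp1 using upt_conv_Cons[OF r0p] by simp
  define s1 where "s1 = fold (strip_step n A B p) [0..<r0] (Cs, t + 2 * n * n + n)"
  have s1: "errs n A B (fst s1) \<subseteq> E0"
    unfolding s1_def
    by (rule fold_keep[where P="\<lambda>s. errs n A B (fst s) \<subseteq> E0"])
       (use strip_errs_mono sub in \<open>force+\<close>)
  obtain C1 t1 where s1e: "s1 = (C1, t1)" by (cases s1)
  have fixed: "(i, j) \<notin> errs n A B (fst (strip_step n A B p r0 s1))"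
  proof (cases "(i, j) \<in> errs n A B C1")
    case True
    show ?thesis unfolding s1e
    proof (rule strip_fix[OF True])
      show "j mod p = r0" by (simp add: r0_def)
      fix j' assume "(i, j') \<in> errs n A B C1" "j' mod p = r0"
      thus "j' = j" using s1 s1e sep r0_def by fastforce
    qed
  next
    case False thus ?thesis using strip_errs_mono[of n A B p r0 C1 t1] s1e by auto
  qed
  have "(i, j) \<notin> errs n A B (fst (fold (strip_step n A B p) [Suc r0..<p] (strip_step n A B p r0 s1)))"
    by (rule fold_keep[where P="\<lambda>s. (i, j) \<notin> errs n A B (fst s)"])
       (use fixed strip_errs_mono in \<open>force+\<close>)
  thus ?thesis unfolding prime_step_eq split s1_def by simp
qed

lemma fp_finite: "finite {p::nat. prime p \<and> card {q. prime q \<and> q < p} < m}"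
proof -
  obtain X :: nat where X: "\<forall>p::nat. card {q. prime q \<and> q < p} < m \<longrightarrow> p \<le> X" using prime_bound[of m] by auto
  show ?thesis by (rule finite_subset[of _ "{..X}"]) (use X in auto)
qed

lemma fp_set: "set (first_primes m) = {p::nat. prime p \<and> card {q. prime q \<and> q < p} < m}"
  unfolding first_primes_def using fp_finite by simp

lemma fp_mono: "m \<le> m' \<Longrightarrow> p \<in> set (first_primes m) \<Longrightarrow> p \<in> set (first_primes m')"
  unfolding fp_set by auto

lemma exp1_le_real: "real n \<ge> 3 \<Longrightarrow> ln (real n) \<ge> 1"
proof -
  assume "real n \<ge> 3"
  hence "exp 1 \<le> real n" using exp_le by linarith
  hence "ln (exp 1) \<le> ln (real n)" using \<open>real n \<ge> 3\<close> by (subst ln_le_cancel_iff) auto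
  thus ?thesis by simp
qed

lemma logratio_nonneg: "logratio n \<ge> 0"
proof (cases "n \<le> 2")
  case True thus ?thesis by (simp add: logratio_def)
next
  case False
  hence "ln (real n) \<ge> 1" by (intro exp1_le_real) simp
  thus ?thesis using False by (simp add: logratio_def)
qed

lemma num_primes_mono:
  assumes "c \<ge> 0" "l \<le> k" shows "num_primes c l n \<le> num_primes c k n"
proof -
  have "c * real l * logratio n \<le> c * real k * logratio n"
    using assms logratio_nonneg by (intro mult_right_mono mult_left_mono) auto
  thus ?thesis unfolding num_primes_def by (intro nat_mono ceiling_mono)
qed

lemma sep_c_pos: assumes "separating_const c" shows "c > 0"
proof (rule ccontr)
  assume "\<not> c > 0"
  hence "num_primes c 1 1 = 0" by (simp add: num_primes_def logratio_def)
  moreover have "\<exists>p\<in>set (first_primes (num_primes c 1 1)). \<forall>i'\<in>{1::nat}-{1}. (1::nat) mod p \<noteq> i' mod p"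
    using assms[unfolded separating_const_def, rule_format, where n=1 and l=1 and P="{1}" and i=1] by simp
  then obtain p where "p \<in> set (first_primes (num_primes c 1 1))" by blast
  ultimately show False by (simp add: fp_set)
qed

lemma alg_eq:
  "algorithm1 c n k A B C' =
     (fst (fold (prime_step n A B) (first_primes (num_primes c k n)) (C', primes_cost (first_primes (num_primes c k n)))),
      snd (fold (prime_step n A B) (first_primes (num_primes c k n)) (C', primes_cost (first_primes (num_primes c k n)))) + n * n)"
  by (simp add: algorithm1_def Let_def split_beta)

lemma prime_errs_mono:
  "errs n A B Cs \<subseteq> E0 \<Longrightarrow> errs n A B (fst (prime_step n A B p (Cs, t))) \<subseteq> E0"
  using prime_cost[of n A B Cs "errs n A B Cs" p t] finite_errs by blast

lemma prime_keep:
  assumes "(i, j) \<notin> errs n A B Cs"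
  shows "(i, j) \<notin> errs n A B (fst (prime_step n A B p (Cs, t)))"
  using prime_errs_mono[of n A B Cs "errs n A B Cs - {(i,j)}" p t] assms by auto

lemma prime_errs_mono':
  "errs n A B (fst s) \<subseteq> E0 \<Longrightarrow> errs n A B (fst (prime_step n A B p s)) \<subseteq> E0"
  by (cases s) (simp add: prime_errs_mono)

lemma prime_keep':
  "(i, j) \<notin> errs n A B (fst s) \<Longrightarrow> (i, j) \<notin> errs n A B (fst (prime_step n A B p s))"
  by (cases s) (simp add: prime_keep)

lemma fold_errs:
  "errs n A B (fst s) \<subseteq> E0 \<Longrightarrow> errs n A B (fst (fold (prime_step n A B) L s)) \<subseteq> E0"
  by (rule fold_keep[where P="\<lambda>s. errs n A B (fst s) \<subseteq> E0"]) (rule prime_errs_mono')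

lemma fold_ij:
  "(i, j) \<notin> errs n A B (fst s) \<Longrightarrow> (i, j) \<notin> errs n A B (fst (fold (prime_step n A B) L s))"
  by (rule fold_keep[where P="\<lambda>s. (i, j) \<notin> errs n A B (fst s)"]) (rule prime_keep')

lemma alg_correct:
  assumes sep: "separating_const c" and nk: "num_errors n A B C' \<le> k"
    and i: "i \<in> {1..n}" and j: "j \<in> {1..n}"
  shows "fst (algorithm1 c n k A B C') i j = matprod n A B i j"
proof -
  define L where "L = first_primes (num_primes c k n)"
  define E0 where "E0 = errs n A B C'"
  have cE0: "card E0 \<le> k" using nk by (simp add: E0_def errs_def num_errors_def)
  define R where "R = fold (prime_step n A B) L (C', primes_cost L)"
  have inv: "errs n A B (fst R) \<subseteq> E0"
    unfolding R_def by (rule fold_errs) (simp add: E0_def)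
  show ?thesis
  proof (rule ccontr)
    assume bad: "\<not> ?thesis"
    hence ijR: "(i, j) \<in> errs n A B (fst R)"
      using i j by (simp add: alg_eq R_def L_def errs_def)
    hence ijE: "(i, j) \<in> E0" using inv by auto
    define P where "P = {j' \<in> {1..n}. (i, j') \<in> E0}"
    have jP: "j \<in> P" using ijE j by (simp add: P_def)
    have "P \<subseteq> snd ` {e \<in> E0. fst e = i}" by (force simp: P_def)
    hence "card P \<le> card (snd ` {e \<in> E0. fst e = i})"
      by (intro card_mono) (auto simp: E0_def finite_errs)
    also have "\<dots> \<le> card {e \<in> E0. fst e = i}" by (rule card_image_le) (simp add: E0_def finite_errs)
    also have "\<dots> \<le> card E0" by (rule card_mono) (auto simp: E0_def finite_errs)
    finally have cP: "card P \<le> k" using cE0 by linarith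
    obtain p where p: "p \<in> set (first_primes (num_primes c (card P) n))"
      and psep: "\<forall>i' \<in> P - {j}. j mod p \<noteq> i' mod p"
    proof -
      have Psub: "P \<subseteq> {1..n}" by (auto simp: P_def)
      have "\<exists>p\<in>set (first_primes (num_primes c (card P) n)). \<forall>i'\<in>P - {j}. j mod p \<noteq> i' mod p"
        using sep[unfolded separating_const_def, rule_format, where n=n and l="card P" and P=P and i=j] Psub jP by blast
      thus ?thesis using that by blast
    qed
    have pL: "p \<in> set L" unfolding L_def
      by (rule fp_mono[OF num_primes_mono[OF _ cP] p]) (use sep_c_pos[OF sep] in simp)
    have p0: "p > 0" using pL by (simp add: L_def fp_set prime_gt_0_nat)
    obtain L1 L2 where L: "L = L1 @ p # L2" using split_list[OF pL] by blast
    define R1 where "R1 = fold (prime_step n A B) L1 (C', primes_cost L)"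
    have R1: "errs n A B (fst R1) \<subseteq> E0"
      unfolding R1_def by (rule fold_errs) (simp add: E0_def)
    have "(i, j) \<notin> errs n A B (fst (prime_step n A B p R1))"
    proof -
      obtain C1 t1 where "R1 = (C1, t1)" by (cases R1)
      thus ?thesis using prime_fix[of n A B C1 E0 p i j t1] R1 p0 ijE psep P_def
        by (auto simp: E0_def errs_def)
    qed
    moreover have "(i, j) \<notin> errs n A B (fst s) \<Longrightarrow> (i, j) \<notin> errs n A B (fst (fold (prime_step n A B) L2 s))" for s
      by (rule fold_ij)
    ultimately have "(i, j) \<notin> errs n A B (fst R)"
      by (simp add: R_def R1_def L)
    thus False using ijR by simp
  qed
qed

lemma alg_cost_nat:
  assumes nk: "num_errors n A B C' \<le> k"
    and X: "\<forall>p\<in>set (first_primes (num_primes c k n)). p \<le> X"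
  shows "snd (algorithm1 c n k A B C') \<le> (X+2)^2 + (X+1)*(2*n*n+n + X*(6*n*n+2*n) + k*(n*(2*n+1))) + n*n"
proof -
  define L where "L = first_primes (num_primes c k n)"
  define E0 where "E0 = errs n A B C'"
  have cE0: "card E0 \<le> k" using nk by (simp add: E0_def errs_def num_errors_def)
  define g where "g p = 2 * n * n + n + p * (6 * n * n + 2 * n) + card E0 * (n * (2 * n + 1))" for p
  define R where "R = fold (prime_step n A B) L (C', primes_cost L)"
  have step: "errs n A B (fst (prime_step n A B p s)) \<subseteq> E0 \<and> snd (prime_step n A B p s) \<le> snd s + g p"
    if "errs n A B (fst s) \<subseteq> E0" for p s
  proof -
    obtain Cs t where s: "s = (Cs, t)" by (cases s)
    show ?thesis using prime_cost[of n A B Cs E0 p t] that unfolding s g_def E0_def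
      by (simp add: finite_errs)
  qed
  have "errs n A B (fst R) \<subseteq> E0 \<and> snd R \<le> snd (C', primes_cost L) + sum_list (map g L)"
    unfolding R_def by (rule fold_inv[where P="\<lambda>s. errs n A B (fst s) \<subseteq> E0"]) (use step E0_def in auto)
  hence R: "snd R \<le> primes_cost L + sum_list (map g L)" by simp
  have dist: "distinct L" by (simp add: L_def first_primes_def)
  have XL: "\<forall>p\<in>set L. p \<le> X" using X by (simp add: L_def)
  have "sum_list (map g L) = sum g (set L)" by (rule sum_list_distinct_conv_sum_set[OF dist])
  also have "\<dots> \<le> sum (\<lambda>_. g X) (set L)"
    by (rule sum_mono) (use XL in \<open>auto simp: g_def intro!: mult_right_mono\<close>)
  also have "\<dots> = card (set L) * g X" by simp
  also have "\<dots> \<le> (X+1) * (2*n*n+n + X*(6*n*n+2*n) + k*(n*(2*n+1)))"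
  proof (rule mult_le_mono)
    have "card (set L) \<le> card {..X}" by (rule card_mono) (use XL in auto)
    thus "card (set L) \<le> X + 1" by simp
    show "g X \<le> 2*n*n+n + X*(6*n*n+2*n) + k*(n*(2*n+1))"
      unfolding g_def using cE0 by (intro add_left_mono mult_right_mono) auto
  qed
  finally have S: "sum_list (map g L) \<le> (X+1) * (2*n*n+n + X*(6*n*n+2*n) + k*(n*(2*n+1)))" .
  have "Max (insert 2 (set L)) \<le> X + 2"
    using XL by (subst Max_le_iff) auto
  hence P: "primes_cost L \<le> (X+2)^2" unfolding primes_cost_def by (rule power_mono) simp
  show ?thesis using R S P unfolding alg_eq R_def L_def by simp
qed

lemma final_arith:
  fixes x nn kk ka nu la C :: real
  assumes ka: "ka \<ge> 1" and nu: "nu \<ge> 1" and la: "la \<ge> 1" and C: "C \<ge> 0"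
    and x: "0 \<le> x" "x \<le> C * ka * la^2" and nn: "0 \<le> nn" "nn \<le> nu" and kk: "0 \<le> kk" "kk \<le> ka"
  shows "(x+2)^2 + (x+1)*(2*nn*nn+nn + x*(6*nn*nn+2*nn) + kk*(nn*(2*nn+1))) + nn*nn
      \<le> ((C+2)^2 + (C+1)*(8*C+6) + 1) * ka^2 * nu^2 * la^4"
proof -
  define Q where "Q = ka * la^2"
  have Q1: "Q \<ge> 1" unfolding Q_def using ka la by (metis mult_mono' one_le_power mult_1 zero_le_one)
  have xQ: "x \<le> C * Q" using x by (simp add: Q_def mult.assoc)
  have nn2: "nn * nn \<le> nu^2" using nn by (metis mult_mono' power2_eq_square)
  have nnnu: "nn \<le> nu^2" using nn nu by (smt (verit) one_le_power power2_eq_square mult_le_cancel_left1)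
  have a1: "(x+2)^2 \<le> ((C+2)*Q)^2"
  proof (rule power_mono)
    show "x + 2 \<le> (C+2)*Q" using xQ Q1 by (simp add: algebra_simps)
    show "0 \<le> x + 2" using x by simp
  qed
  have E1: "2*nn*nn+nn \<le> 3 * nu^2" using nn2 nnnu by linarith
  have E2: "6*nn*nn+2*nn \<le> 8 * nu^2" using nn2 nnnu by linarith
  have E3: "x*(6*nn*nn+2*nn) \<le> (C*Q) * (8*nu^2)"
    by (rule mult_mono[OF xQ E2]) (use C Q1 nn in auto)
  have E4: "kk*(nn*(2*nn+1)) \<le> ka * (3*nu^2)"
    by (rule mult_mono) (use kk E1 nn in \<open>auto simp: algebra_simps\<close>)
  have kaQ: "ka \<le> Q" unfolding Q_def using ka la by (metis mult_le_cancel_left1 one_le_power order_trans zero_le_one linorder_not_less less_le_trans mult.commute)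
  have E5: "ka * (3*nu^2) \<le> Q * (3*nu^2)" by (rule mult_right_mono[OF kaQ]) simp
  have E6: "3 * nu^2 \<le> Q * (3 * nu^2)" using mult_right_mono[OF Q1, of "3*nu^2"] by simp
  have E: "2*nn*nn+nn + x*(6*nn*nn+2*nn) + kk*(nn*(2*nn+1)) \<le> (8*C+6) * Q * nu^2"
    using E1 E3 E4 E5 E6 by (simp add: algebra_simps)
  have x1: "x + 1 \<le> (C+1) * Q" using xQ Q1 by (simp add: algebra_simps)
  have E0: "0 \<le> 2*nn*nn+nn + x*(6*nn*nn+2*nn) + kk*(nn*(2*nn+1))"
    using x nn kk by (intro add_nonneg_nonneg mult_nonneg_nonneg) auto
  have CQ: "0 \<le> (C+1)*Q" using C Q1 by simp
  have a2: "(x+1)*(2*nn*nn+nn + x*(6*nn*nn+2*nn) + kk*(nn*(2*nn+1))) \<le> ((C+1)*Q) * ((8*C+6) * Q * nu^2)"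
    by (rule mult_mono[OF x1 E CQ E0])
  have Q2: "1 \<le> Q^2" using Q1 by simp
  have "1 * nu^2 \<le> Q^2 * nu^2" by (rule mult_right_mono[OF Q2]) simp
  hence a3: "nn * nn \<le> Q^2 * nu^2" using nn2 by linarith
  have "(x+2)^2 + (x+1)*(2*nn*nn+nn + x*(6*nn*nn+2*nn) + kk*(nn*(2*nn+1))) + nn*nn
       \<le> ((C+2)*Q)^2 * 1 + ((C+1)*Q) * ((8*C+6) * Q * nu^2) + Q^2 * nu^2"
    using a1 a2 a3 by linarith
  also have "((C+2)*Q)^2 * 1 \<le> ((C+2)*Q)^2 * nu^2"
    by (rule mult_left_mono) (use nu in auto)
  also have "((C+2)*Q)^2 * nu^2 + ((C+1)*Q) * ((8*C+6) * Q * nu^2) + Q^2 * nu^2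
      = ((C+2)^2 + (C+1)*(8*C+6) + 1) * ka^2 * nu^2 * la^4" unfolding Q_def by algebra
  finally show ?thesis by linarith
qed

lemma ln4: "ln (4::real) > 1"
proof -
  have "ln (real (3::nat)) \<ge> 1" by (rule exp1_le_real) simp
  hence "ln (3::real) \<ge> 1" by simp
  moreover have "ln (3::real) < ln 4" by (subst ln_less_cancel_iff) auto
  ultimately show ?thesis by linarith
qed

lemma logratio_bound:
  defines "\<delta> \<equiv> ln (ln (4::real))"
  shows "logratio n \<le> max 1 \<bar>logratio 3\<bar> + ln (real n) / \<delta>"
proof -
  have d0: "\<delta> > 0" unfolding \<delta>_def using ln4 by simp
  have lnn: "0 \<le> ln (real n) / \<delta>" using d0 by (cases "n = 0") auto
  consider "n \<le> 2" | "n = 3" | "n \<ge> 4" by linarith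
  thus ?thesis
  proof cases
    case 1 thus ?thesis using lnn by (simp add: logratio_def)
  next
    case 2 thus ?thesis using lnn by simp
  next
    case 3
    have ln1: "ln (real n) \<ge> 1" using 3 by (intro exp1_le_real) simp
    have "ln (4::real) \<le> ln (real n)" using 3 by simp
    hence "\<delta> \<le> ln (ln (real n))" unfolding \<delta>_def using ln4 by (subst ln_le_cancel_iff) auto
    hence "ln (real n) / ln (ln (real n)) \<le> ln (real n) / \<delta>"
    proof -
      have "ln (ln (real n)) > 0" using d0 \<open>\<delta> \<le> ln (ln (real n))\<close> by linarith
      thus ?thesis using d0 ln1 \<open>\<delta> \<le> ln (ln (real n))\<close> by (intro divide_left_mono) auto
    qed
    thus ?thesis using 3 by (simp add: logratio_def)
  qed
qed

theorem lemma2: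
  fixes c :: real
  assumes "separating_const c"
  shows "\<exists>K d. \<forall>n k (A :: 'a::ring_1 matrix) B C'.
           num_errors n A B C' \<le> k \<longrightarrow>
             (\<forall>i \<in> {1..n}. \<forall>j \<in> {1..n}. fst (algorithm1 c n k A B C') i j = matprod n A B i j)
           \<and> real (snd (algorithm1 c n k A B C'))
               \<le> K * real (max 1 k) ^ 2 * real (max 1 n) ^ 2 * ln (real (n + k) + 3) ^ d"
proof -
  have c0: "c > 0" by (rule sep_c_pos[OF assms])
  define \<delta> where "\<delta> = ln (ln (4::real))"
  have d0: "\<delta> > 0" unfolding \<delta>_def using ln4 by simp
  define L3 where "L3 = max 1 \<bar>logratio 3\<bar>"
  have L3: "L3 \<ge> 1" by (simp add: L3_def)
  have lr: "logratio n \<le> L3 + ln (real n) / \<delta>" for n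
    unfolding L3_def \<delta>_def by (rule logratio_bound)
  define Lc where "Lc = L3 + 1 / \<delta>"
  have Lc0: "Lc \<ge> 0" using L3 d0 by (simp add: Lc_def)
  define Ac where "Ac = c * Lc + 2"
  have Ac2: "Ac \<ge> 2" using c0 Lc0 by (simp add: Ac_def)
  define Bc where "Bc = ln (2 * Ac) + 2"
  have lnA: "ln (2 * Ac) \<ge> 0" using Ac2 by simp
  define Cc where "Cc = 16 * Ac * (Bc / ln 2 + 1)"
  have Cc0: "Cc \<ge> 0" using Ac2 lnA by (simp add: Cc_def Bc_def)
  show ?thesis
  proof (intro exI[of _ "(Cc+2)^2 + (Cc+1)*(8*Cc+6) + 1"] exI[of _ 4] allI impI conjI)
    fix n k :: nat and A B C' :: "'a matrix"
    assume nk: "num_errors n A B C' \<le> k"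
    show "\<forall>i \<in> {1..n}. \<forall>j \<in> {1..n}. fst (algorithm1 c n k A B C') i j = matprod n A B i j"
      using alg_correct[OF assms nk] by blast
    define m where "m = num_primes c k n"
    obtain X :: nat where X: "\<forall>p. card {q. prime q \<and> q < p} < m \<longrightarrow> p \<le> X"
      and Xb: "real X \<le> 16 * (real m + 1) * (ln (2 * real m + 2) / ln 2 + 1)"
      using prime_bound[of m] by auto
    have XL: "\<forall>p\<in>set (first_primes (num_primes c k n)). p \<le> X"
      using X by (simp add: fp_set m_def)
    define ka where "ka = real (max 1 k)"
    define nu where "nu = real (max 1 n)"
    define la where "la = ln (real (n + k) + 3)"
    have ka1: "ka \<ge> 1" and nu1: "nu \<ge> 1" by (simp_all add: ka_def nu_def)
    have kka: "real k \<le> ka" and nnu: "real n \<le> nu" by (simp_all add: ka_def nu_def)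
    have la1: "la \<ge> 1" unfolding la_def using exp1_le_real[of "n+k+3"] by simp
    have lnn: "ln (real n) \<le> la"
    proof (cases "n = 0")
      case True thus ?thesis using la1 by simp
    next
      case False thus ?thesis unfolding la_def by (subst ln_le_cancel_iff) auto
    qed
    have lnka: "ln ka \<le> la"
      unfolding la_def using ka1 by (subst ln_le_cancel_iff) (auto simp: ka_def)
    have lr2: "logratio n \<le> Lc * la"
    proof -
      have "ln (real n) / \<delta> \<le> la / \<delta>" using lnn d0 by (simp add: divide_right_mono)
      moreover have "L3 \<le> L3 * la" using L3 la1 by simp
      ultimately have "logratio n \<le> L3 * la + la / \<delta>" using lr[of n] by linarith
      thus ?thesis by (simp add: Lc_def algebra_simps)
    qed
    have m1: "real m \<le> c * real k * logratio n + 1"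
    proof -
      have nn: "0 \<le> c * real k * logratio n" using c0 logratio_nonneg by simp
      have "real m = of_int \<lceil>c * real k * logratio n\<rceil>"
        unfolding m_def num_primes_def using nn by simp
      also have "\<dots> \<le> c * real k * logratio n + 1" by linarith
      finally show ?thesis .
    qed
    have "c * real k * logratio n \<le> c * ka * (Lc * la)"
      using c0 kka lr2 logratio_nonneg by (intro mult_mono) auto
    hence "real m + 1 \<le> c * Lc * ka * la + 2" using m1 by (simp add: algebra_simps)
    also have "\<dots> \<le> c * Lc * ka * la + 2 * (ka * la)"
      using mult_mono[OF ka1 la1] ka1 by simp
    also have "\<dots> = Ac * (ka * la)" by (simp add: Ac_def algebra_simps)
    finally have mA: "real m + 1 \<le> Ac * (ka * la)" .
    have "ln (2 * real m + 2) \<le> ln (2 * (Ac * (ka * la)))"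
      using mA by (subst ln_le_cancel_iff) auto
    also have "\<dots> = ln (2 * Ac) + ln ka + ln la"
      using Ac2 ka1 la1 by (simp add: ln_mult)
    also have "\<dots> \<le> ln (2 * Ac) * la + la + la"
    proof -
      have "ln la \<le> la" using la1 ln_le_minus_one[of la] by simp
      moreover have "ln (2 * Ac) \<le> ln (2 * Ac) * la" using lnA la1 by (simp add: mult_le_cancel_left1)
      ultimately show ?thesis using lnka by linarith
    qed
    also have "\<dots> = Bc * la" by (simp add: Bc_def algebra_simps)
    finally have lnm: "ln (2 * real m + 2) \<le> Bc * la" .
    have "ln (2 * real m + 2) / ln 2 + 1 \<le> Bc * la / ln 2 + la"
    proof -
      have "ln (2 * real m + 2) / ln 2 \<le> Bc * la / ln 2" using lnm by (rule divide_right_mono) simp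
      thus ?thesis using la1 by linarith
    qed
    also have "\<dots> = (Bc / ln 2 + 1) * la" by (simp add: algebra_simps)
    finally have lq: "ln (2 * real m + 2) / ln 2 + 1 \<le> (Bc / ln 2 + 1) * la" .
    have lq0: "0 \<le> ln (2 * real m + 2) / ln 2 + 1" by simp
    have "real X \<le> 16 * (real m + 1) * (ln (2 * real m + 2) / ln 2 + 1)" by (rule Xb)
    also have "\<dots> \<le> 16 * (Ac * (ka * la)) * ((Bc / ln 2 + 1) * la)"
      using mA lq lq0 by (intro mult_mono) auto
    also have "\<dots> = Cc * ka * la^2" by (simp add: Cc_def power2_eq_square algebra_simps)
    finally have Xc: "real X \<le> Cc * ka * la^2" .
    have "real (snd (algorithm1 c n k A B C'))
       \<le> real ((X+2)^2 + (X+1)*(2*n*n+n + X*(6*n*n+2*n) + k*(n*(2*n+1))) + n*n)"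
      using alg_cost_nat[OF nk XL] by (simp only: of_nat_le_iff)
    also have "\<dots> = (real X+2)^2 + (real X+1)*(2*real n*real n+real n + real X*(6*real n*real n+2*real n)
        + real k*(real n*(2*real n+1))) + real n*real n"
      by (simp only: of_nat_add of_nat_mult of_nat_power of_nat_numeral of_nat_1)
    also have "\<dots> \<le> ((Cc+2)^2 + (Cc+1)*(8*Cc+6) + 1) * ka^2 * nu^2 * la^4"
      by (rule final_arith[OF ka1 nu1 la1 Cc0 _ Xc _ nnu _ kka]) auto
    finally show "real (snd (algorithm1 c n k A B C'))
               \<le> ((Cc+2)^2 + (Cc+1)*(8*Cc+6) + 1) * real (max 1 k) ^ 2 * real (max 1 n) ^ 2 * ln (real (n + k) + 3) ^ 4"
      by (simp add: ka_def nu_def la_def)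
  qed
qed

end
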